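(* There is an absolute constant $\delta>0$ such that for every constant $c_1\in(0,0.01)$, every sufficiently large $a$, every set $A$ of size $a$ and every $r\in\{0,1\}^A$, at least one of the functions $x\mapsto h^{(-,0)}(x\oplus r)$ and $x\mapsto h^{(-,1)}(x\oplus r)$ on $\{0,1\}^A$ has distance at least $\delta$ from every monotone function on $\{0,1\}^A$.
   Context: On $\{0,1\}^A$ with $|A|=a$: $h^{(-,0)}(z)=1$ iff $|z|>a/2+c_1\sqrt a$, and $h^{(-,1)}(z)=1$ iff $|z|<a/2-c_1\sqrt a$, where $|z|$ is Hamming weight. $\oplus$ is coordinatewise XOR. Distance between functions is the fraction of points of $\{0,1\}^A$ (uniform measure) on which they differ; monotone means $f(x)\le f(y)$ whenever $x\le y$ coordinatewise. *)

theory Defs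
  imports Complex_Main
begin

text \<open>Points of {0,1}^A are represented as Boolean functions on nat vanishing outside A.\<close>
definition cube :: "nat set \<Rightarrow> (nat \<Rightarrow> bool) set" where
  "cube A = {x. \<forall>i. i \<notin> A \<longrightarrow> \<not> x i}"

definition hweight :: "nat set \<Rightarrow> (nat \<Rightarrow> bool) \<Rightarrow> nat" where
  "hweight A z = card {i \<in> A. z i}"

definition xorv :: "(nat \<Rightarrow> bool) \<Rightarrow> (nat \<Rightarrow> bool) \<Rightarrow> (nat \<Rightarrow> bool)" where
  "xorv x r = (\<lambda>i. x i \<noteq> r i)"

definition h_minus_0 :: "real \<Rightarrow> nat set \<Rightarrow> (nat \<Rightarrow> bool) \<Rightarrow> bool" where
  "h_minus_0 c1 A z \<longleftrightarrow> real (hweight A z) > real (card A) / 2 + c1 * sqrt (real (card A))"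

definition h_minus_1 :: "real \<Rightarrow> nat set \<Rightarrow> (nat \<Rightarrow> bool) \<Rightarrow> bool" where
  "h_minus_1 c1 A z \<longleftrightarrow> real (hweight A z) < real (card A) / 2 - c1 * sqrt (real (card A))"

definition monotone_cube :: "nat set \<Rightarrow> ((nat \<Rightarrow> bool) \<Rightarrow> bool) \<Rightarrow> bool" where
  "monotone_cube A f \<longleftrightarrow>
     (\<forall>x\<in>cube A. \<forall>y\<in>cube A. (\<forall>i\<in>A. x i \<longrightarrow> y i) \<longrightarrow> (f x \<longrightarrow> f y))"

definition fdist :: "nat set \<Rightarrow> ((nat \<Rightarrow> bool) \<Rightarrow> bool) \<Rightarrow> ((nat \<Rightarrow> bool) \<Rightarrow> bool) \<Rightarrow> real" where
  "fdist A f g = real (card {x \<in> cube A. f x \<noteq> g x}) / 2 ^ card A"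

end

theory Submission
  imports Defs
begin


lemma sum_Pow_insert:
  assumes "finite A" "i \<notin> A"
  shows "(\<Sum>Z\<in>Pow (insert i A). f Z) = (\<Sum>Z\<in>Pow A. f Z) + (\<Sum>Z\<in>Pow A. f (insert i Z))"
proof -
  have inj: "inj_on (insert i) (Pow A)" using assms(2) by (auto simp: inj_on_def)
  have dis: "Pow A \<inter> insert i ` Pow A = {}" using assms(2) by auto
  have "(\<Sum>Z\<in>Pow (insert i A). f Z) = (\<Sum>Z\<in>Pow A. f Z) + (\<Sum>Z\<in>insert i ` Pow A. f Z)"
    unfolding Pow_insert using assms(1) dis by (intro sum.union_disjoint) auto
  also have "(\<Sum>Z\<in>insert i ` Pow A. f Z) = (\<Sum>Z\<in>Pow A. f (insert i Z))"
    using inj by (simp add: sum.reindex)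
  finally show ?thesis .
qed

lemma card_insert_Int:
  assumes "finite A" "i \<notin> A" "Z \<subseteq> A"
  shows "card (insert i Z \<inter> S) = card (Z \<inter> S) + (if i \<in> S then 1 else 0)"
proof -
  have "finite Z" using assms finite_subset by blast
  moreover have "i \<notin> Z" using assms by auto
  ultimately show ?thesis by (auto simp: Int_insert_left)
qed

lemma moments:
  assumes "finite A"
  shows "(\<Sum>Z\<in>Pow A. (real (card (Z \<inter> S)) - real (card (A \<inter> S)) / 2)^2)
           = real (card (A \<inter> S)) * 2 ^ card A / 4
       \<and> (\<Sum>Z\<in>Pow A. (real (card (Z \<inter> S)) - real (card (A \<inter> S)) / 2)^4)
           = (3 * real (card (A \<inter> S))^2 - 2 * real (card (A \<inter> S))) * 2 ^ card A / 16"
  using assms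
proof (induction A rule: finite_induct)
  case empty
  then show ?case by simp
next
  case (insert i A)
  define m where "m = real (card (A \<inter> S))"
  define d where "d = (\<lambda>Z. real (card (Z \<inter> S)) - m / 2)"
  have cA: "card (insert i A) = Suc (card A)" using insert by simp
  show ?case
  proof (cases "i \<in> S")
    case True
    have m1: "real (card (insert i A \<inter> S)) = m + 1"
      using card_insert_Int[OF insert(1,2) subset_refl, of S] True by (simp add: m_def)
    have e1: "\<And>Z. Z \<in> Pow A \<Longrightarrow> real (card (Z \<inter> S)) - (m+1)/2 = d Z - 1/2"
      by (simp add: d_def field_simps)
    have e2: "\<And>Z. Z \<in> Pow A \<Longrightarrow> real (card (insert i Z \<inter> S)) - (m+1)/2 = d Z + 1/2"
      using card_insert_Int[OF insert(1,2), of _ S] True by (simp add: d_def field_simps)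
    have s2: "(\<Sum>Z\<in>Pow (insert i A). (real (card (Z \<inter> S)) - (m+1) / 2)^2)
        = (\<Sum>Z\<in>Pow A. 2 * (d Z)^2 + 1/2)"
    proof -
      have "(\<Sum>Z\<in>Pow (insert i A). (real (card (Z \<inter> S)) - (m+1) / 2)^2)
          = (\<Sum>Z\<in>Pow A. (d Z - 1/2)^2) + (\<Sum>Z\<in>Pow A. (d Z + 1/2)^2)"
        apply (subst sum_Pow_insert[OF insert(1,2)])
        apply (intro arg_cong2[where f="(+)"] sum.cong refl)
        using e1 e2 by auto
      also have "\<dots> = (\<Sum>Z\<in>Pow A. 2 * (d Z)^2 + 1/2)"
        by (simp add: sum.distrib[symmetric] power2_eq_square algebra_simps)
      finally show ?thesis .
    qed
    have s4: "(\<Sum>Z\<in>Pow (insert i A). (real (card (Z \<inter> S)) - (m+1) / 2)^4)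
        = (\<Sum>Z\<in>Pow A. 2 * (d Z)^4 + 3 * (d Z)^2 + 1/8)"
    proof -
      have "(\<Sum>Z\<in>Pow (insert i A). (real (card (Z \<inter> S)) - (m+1) / 2)^4)
          = (\<Sum>Z\<in>Pow A. (d Z - 1/2)^4) + (\<Sum>Z\<in>Pow A. (d Z + 1/2)^4)"
        apply (subst sum_Pow_insert[OF insert(1,2)])
        apply (intro arg_cong2[where f="(+)"] sum.cong refl)
        using e1 e2 by auto
      also have "\<dots> = (\<Sum>Z\<in>Pow A. 2 * (d Z)^4 + 3 * (d Z)^2 + 1/8)"
        by (simp only: sum.distrib[symmetric]) (intro sum.cong refl, simp add: field_simps power4_eq_xxxx power2_eq_square)
      finally show ?thesis .
    qed
    have IH2: "(\<Sum>Z\<in>Pow A. (d Z)^2) = m * 2 ^ card A / 4" using insert(3) by (simp add: d_def m_def)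
    have IH4: "(\<Sum>Z\<in>Pow A. (d Z)^4) = (3*m^2 - 2*m) * 2 ^ card A / 16" using insert(3) by (simp add: d_def m_def)
    have cP: "card (Pow A) = 2 ^ card A" using insert(1) by (simp add: card_Pow)
    have t2: "(\<Sum>Z\<in>Pow A. 2 * (d Z)^2 + 1/2) = 2 * (\<Sum>Z\<in>Pow A. (d Z)^2) + 2 ^ card A / 2"
      by (simp add: sum.distrib sum_distrib_left cP)
    have t4: "(\<Sum>Z\<in>Pow A. 2 * (d Z)^4 + 3 * (d Z)^2 + 1/8) = 2 * (\<Sum>Z\<in>Pow A. (d Z)^4) + 3 * (\<Sum>Z\<in>Pow A. (d Z)^2) + 2 ^ card A / 8"
      by (simp add: sum.distrib sum_distrib_left cP)
    show ?thesis
      unfolding m1 s2 s4 cA t2 t4 IH2 IH4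
      by (simp add: field_simps power2_eq_square)
  next
    case False
    have m1: "real (card (insert i A \<inter> S)) = m"
      using card_insert_Int[OF insert(1,2) subset_refl, of S] False by (simp add: m_def)
    have e2: "\<And>Z. Z \<in> Pow A \<Longrightarrow> real (card (insert i Z \<inter> S)) = real (card (Z \<inter> S))"
      using card_insert_Int[OF insert(1,2), of _ S] False by simp
    have r: "\<And>g::real\<Rightarrow>real. (\<Sum>Z\<in>Pow (insert i A). g (real (card (Z \<inter> S)))) = 2 * (\<Sum>Z\<in>Pow A. g (real (card (Z \<inter> S))))"
    proof -
      fix g :: "real \<Rightarrow> real"
      have "(\<Sum>Z\<in>Pow A. g (real (card (insert i Z \<inter> S)))) = (\<Sum>Z\<in>Pow A. g (real (card (Z \<inter> S))))"
        by (rule sum.cong) (use e2 in auto)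
      then show "(\<Sum>Z\<in>Pow (insert i A). g (real (card (Z \<inter> S)))) = 2 * (\<Sum>Z\<in>Pow A. g (real (card (Z \<inter> S))))"
        by (simp add: sum_Pow_insert[OF insert(1,2)])
    qed
    show ?thesis
      unfolding m1 cA
      using r[of "\<lambda>t. (t - m/2)^2"] r[of "\<lambda>t. (t - m/2)^4"] insert(3)
      by (simp add: m_def)
  qed
qed



lemma markov_count:
  fixes \<phi> :: "'a \<Rightarrow> real"
  assumes "finite B" "l > 0" "\<And>Z. Z \<in> B \<Longrightarrow> \<phi> Z \<ge> 0" "\<And>Z. Z \<in> B \<Longrightarrow> P Z \<Longrightarrow> l \<le> \<phi> Z"
  shows "l * real (card {Z\<in>B. P Z}) \<le> (\<Sum>Z\<in>B. \<phi> Z)"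
proof -
  have "l * real (card {Z\<in>B. P Z}) = (\<Sum>Z\<in>{Z\<in>B. P Z}. l)" by simp
  also have "\<dots> \<le> (\<Sum>Z\<in>{Z\<in>B. P Z}. \<phi> Z)" by (rule sum_mono) (use assms in auto)
  also have "\<dots> \<le> (\<Sum>Z\<in>B. \<phi> Z)" by (rule sum_mono2) (use assms in auto)
  finally show ?thesis .
qed

lemma sym_count:
  assumes "finite A"
  shows "card {Z\<in>Pow A. real (card Z) - real (card A)/2 > t} = card {Z\<in>Pow A. real (card Z) - real (card A)/2 < -t}"
proof -
  have cd: "\<And>Z. Z \<subseteq> A \<Longrightarrow> real (card (A - Z)) = real (card A) - real (card Z)"
    using assms by (simp add: card_Diff_subset finite_subset card_mono of_nat_diff)
  have "bij_betw (\<lambda>Z. A - Z) {Z\<in>Pow A. real (card Z) - real (card A)/2 > t} {Z\<in>Pow A. real (card Z) - real (card A)/2 < -t}"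
  proof (rule bij_betw_byWitness[where f'="\<lambda>Z. A - Z"])
    show "\<forall>Z\<in>{Z\<in>Pow A. real (card Z) - real (card A)/2 > t}. A - (A - Z) = Z" by auto
    show "\<forall>Z\<in>{Z\<in>Pow A. real (card Z) - real (card A)/2 < -t}. A - (A - Z) = Z" by auto
    show "(\<lambda>Z. A - Z) ` {Z\<in>Pow A. real (card Z) - real (card A)/2 > t} \<subseteq> {Z\<in>Pow A. real (card Z) - real (card A)/2 < -t}"
      using cd by auto
    show "(\<lambda>Z. A - Z) ` {Z\<in>Pow A. real (card Z) - real (card A)/2 < -t} \<subseteq> {Z\<in>Pow A. real (card Z) - real (card A)/2 > t}"
      using cd by auto
  qed
  then show ?thesis by (rule bij_betw_same_card)
qed

lemma pz_point:
  fixes Y \<tau> \<mu> :: real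
  assumes "Y \<ge> 0" "\<mu> > 0" "\<tau> \<ge> 0"
  shows "Y \<le> \<tau> + (Y^2/\<mu> + \<mu> * (if Y > \<tau> then 1 else 0)) / 2"
proof (cases "Y > \<tau>")
  case True
  have "(Y - \<mu>)^2 \<ge> 0" by simp
  then have "2 * Y * \<mu> \<le> Y^2 + \<mu>^2" by (simp add: power2_eq_square algebra_simps)
  then have "Y \<le> (Y^2/\<mu> + \<mu>) / 2" using assms by (simp add: field_simps power2_eq_square)
  then show ?thesis using True assms by (simp add: add_increasing)
next
  case False
  from False have e: "(if Y > \<tau> then 1 else 0) = (0::real)" by simp
  have h: "0 \<le> (Y^2/\<mu> + \<mu>*0)/2" using assms by simp
  show ?thesis unfolding e using h False by linarith
qed

lemma moments_A:
  assumes "finite A"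
  shows "(\<Sum>Z\<in>Pow A. (real (card Z) - real (card A) / 2)^2) = real (card A) * 2 ^ card A / 4"
    and "(\<Sum>Z\<in>Pow A. (real (card Z) - real (card A) / 2)^4) = (3 * real (card A)^2 - 2 * real (card A)) * 2 ^ card A / 16"
proof -
  have e: "\<And>Z. Z \<in> Pow A \<Longrightarrow> Z \<inter> A = Z" by auto
  have m: "(\<Sum>Z\<in>Pow A. (real (card (Z \<inter> A)) - real (card (A \<inter> A)) / 2)^2) = real (card (A \<inter> A)) * 2 ^ card A / 4
       \<and> (\<Sum>Z\<in>Pow A. (real (card (Z \<inter> A)) - real (card (A \<inter> A)) / 2)^4) = (3 * real (card (A \<inter> A))^2 - 2 * real (card (A \<inter> A))) * 2 ^ card A / 16"
    by (rule moments[OF assms])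
  have s: "\<And>f::nat\<Rightarrow>real. (\<Sum>Z\<in>Pow A. f (card (Z \<inter> A))) = (\<Sum>Z\<in>Pow A. f (card Z))"
    by (rule sum.cong) (auto simp: e)
  show "(\<Sum>Z\<in>Pow A. (real (card Z) - real (card A) / 2)^2) = real (card A) * 2 ^ card A / 4"
    using m s[of "\<lambda>n. (real n - real (card A) / 2)^2"] by simp
  show "(\<Sum>Z\<in>Pow A. (real (card Z) - real (card A) / 2)^4) = (3 * real (card A)^2 - 2 * real (card A)) * 2 ^ card A / 16"
    using m s[of "\<lambda>n. (real n - real (card A) / 2)^4"] by simp
qed

lemma upper_count:
  assumes "finite A" "card A > 0" "0 \<le> c" "c < 0.01"
  shows "real (card {Z\<in>Pow A. real (card Z) - real (card A)/2 > c * sqrt (real (card A))}) \<ge> 0.15 * 2 ^ card A"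
proof -
  define a where "a = real (card A)"
  define N where "N = (2::real) ^ card A"
  define W :: "'a set \<Rightarrow> real" where "W = (\<lambda>Z. real (card Z) - a/2)"
  define \<tau> where "\<tau> = c^2 * a"
  define \<mu> where "\<mu> = 3 * a / 4"
  have a0: "a > 0" using assms by (simp add: a_def)
  have cP: "real (card (Pow A)) = N" using assms(1) by (simp add: card_Pow N_def)
  have M2: "(\<Sum>Z\<in>Pow A. (W Z)^2) = a * N / 4" using moments_A(1)[OF assms(1)] by (simp add: W_def a_def N_def)
  have M4: "(\<Sum>Z\<in>Pow A. ((W Z)^2)^2) = (3 * a^2 - 2 * a) * N / 16"
    using moments_A(2)[OF assms(1)] by (simp add: W_def a_def N_def power_mult[symmetric])
  define cnt where "cnt = real (card {Z\<in>Pow A. (W Z)^2 > \<tau>})"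
  have cnt_sum: "cnt = (\<Sum>Z\<in>Pow A. (if (W Z)^2 > \<tau> then 1 else 0))"
    unfolding cnt_def by (simp add: sum.If_cases assms(1) Int_def conj_commute)
  have "(\<Sum>Z\<in>Pow A. (W Z)^2) \<le> (\<Sum>Z\<in>Pow A. \<tau> + (((W Z)^2)^2/\<mu> + \<mu> * (if (W Z)^2 > \<tau> then 1 else 0)) / 2)"
    by (rule sum_mono, rule pz_point) (use a0 in \<open>auto simp: \<mu>_def \<tau>_def\<close>)
  also have "\<dots> = (\<Sum>Z\<in>Pow A. \<tau> + ((W Z)^2)^2/(2*\<mu>) + \<mu>/2 * (if (W Z)^2 > \<tau> then 1 else 0))"
    by (rule sum.cong) (auto simp: add_divide_distrib)
  also have "\<dots> = \<tau> * N + (\<Sum>Z\<in>Pow A. ((W Z)^2)^2) / (2*\<mu>) + \<mu> / 2 * cnt"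
    by (simp only: sum.distrib sum_divide_distrib[symmetric] sum_distrib_left[symmetric] cnt_sum sum_constant cP) simp
  finally have ineq: "a * N / 4 \<le> \<tau> * N + (3 * a^2 - 2 * a) * N / 16 / (2*\<mu>) + \<mu> / 2 * cnt"
    unfolding M2 M4 .
  have "(3 * a^2 - 2 * a) * N / 16 / (2*\<mu>) \<le> a * N / 8"
    using a0 by (simp add: \<mu>_def N_def field_simps power2_eq_square)
  with ineq have "a * N / 8 - \<tau> * N \<le> \<mu> / 2 * cnt" by linarith
  moreover have "\<tau> \<le> 0.0001 * a"
  proof -
    have "c*c \<le> 0.01*0.01" using assms by (intro mult_mono) auto
    then have "c^2 * a \<le> 0.0001 * a" using a0 by (intro mult_right_mono) (auto simp: power2_eq_square)
    then show ?thesis by (simp add: \<tau>_def)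
  qed
  moreover have N0: "N \<ge> 0" by (simp add: N_def)
  ultimately have h1: "a * N / 8 - \<tau> * N \<le> 3 * a / 8 * cnt" and t1: "\<tau> \<le> 0.0001 * a"
    by (auto simp: \<mu>_def)
  have "\<tau> * N \<le> 0.0001 * a * N" using mult_right_mono[OF t1 N0] .
  with h1 have "a * N / 8 - 0.0001 * a * N \<le> 3 * a / 8 * cnt" by linarith
  then have "N * 1249 \<le> cnt * 3750" using a0 by (simp add: field_simps)
  with N0 have c3: "cnt \<ge> 0.3 * N" by linarith
  have split: "{Z\<in>Pow A. (W Z)^2 > \<tau>} = {Z\<in>Pow A. W Z > c * sqrt a} \<union> {Z\<in>Pow A. W Z < - (c * sqrt a)}"
  proof -
    have "\<And>w. w^2 > \<tau> \<longleftrightarrow> w > c * sqrt a \<or> w < - (c * sqrt a)"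
    proof -
      fix w :: real
      have "\<tau> = (c * sqrt a)^2" using a0 by (simp add: \<tau>_def power_mult_distrib)
      moreover have "c * sqrt a \<ge> 0" using assms a0 by simp
      ultimately show "w^2 > \<tau> \<longleftrightarrow> w > c * sqrt a \<or> w < - (c * sqrt a)"
        using abs_le_square_iff[of w "c * sqrt a"] by (auto simp: not_le[symmetric] abs_le_iff)
    qed
    then show ?thesis by auto
  qed
  have dis: "{Z\<in>Pow A. W Z > c * sqrt a} \<inter> {Z\<in>Pow A. W Z < - (c * sqrt a)} = {}"
  proof -
    have "c * sqrt a \<ge> 0" using assms a0 by simp
    then show ?thesis by auto
  qed
  have sy: "card {Z\<in>Pow A. W Z > c * sqrt a} = card {Z\<in>Pow A. W Z < - (c * sqrt a)}"
    using sym_count[OF assms(1), of "c * sqrt a"] by (simp add: W_def a_def)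
  have "cnt = 2 * real (card {Z\<in>Pow A. W Z > c * sqrt a})"
    unfolding cnt_def split using dis sy assms(1)
    by (subst card_Un_disjoint) auto
  with c3 show ?thesis by (simp add: W_def a_def N_def)
qed



lemma binom_ratio:
  fixes q :: real
  assumes "k \<le> m" "q \<ge> 0" "\<And>j. j < k \<Longrightarrow> real n - real j \<le> q * (real m - real j)"
  shows "real (n choose k) \<le> q^k * real (m choose k)"
  using assms
proof (induction k)
  case 0
  then show ?case by simp
next
  case (Suc k)
  have IH: "real (n choose k) \<le> q^k * real (m choose k)" using Suc by auto
  have rec: "\<And>n. real (Suc k) * real (n choose Suc k) = real (n - k) * real (n choose k)"
  proof -
    fix n
    have "Suc k * (n choose Suc k) = (n - k) * (n choose k)"
      using binomial_absorption[of k n] binomial_absorb_comp[of n k] by simp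
    then show "real (Suc k) * real (n choose Suc k) = real (n - k) * real (n choose k)"
      by (metis of_nat_mult)
  qed
  have mk: "real m - real k \<ge> 1" using Suc.prems(1) by simp
  have hk: "real n - real k \<le> q * (real m - real k)" using Suc.prems(3)[of k] by simp
  have nk: "real (n - k) \<le> q * (real m - real k)"
  proof (cases "k \<le> n")
    case True then show ?thesis using hk by (simp add: of_nat_diff)
  next
    case False then show ?thesis using mk Suc.prems(2) by simp
  qed
  have mk': "real (m - k) = real m - real k" using Suc.prems(1) by (simp add: of_nat_diff)
  have "real (Suc k) * real (n choose Suc k) = real (n - k) * real (n choose k)" by (rule rec)
  also have "\<dots> \<le> (q * (real m - real k)) * (q^k * real (m choose k))"
    by (rule mult_mono[OF nk IH]) (use Suc.prems(2) mk in auto)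
  also have "\<dots> = q^(Suc k) * (real (m - k) * real (m choose k))" by (simp add: mk' algebra_simps)
  also have "\<dots> = q^(Suc k) * (real (Suc k) * real (m choose Suc k))" by (simp only: rec)
  finally have "real (Suc k) * real (n choose Suc k) \<le> real (Suc k) * (q^(Suc k) * real (m choose Suc k))"
    by (simp add: algebra_simps)
  then show ?case by (simp only: mult_le_cancel_left_pos of_nat_0_less_iff zero_less_Suc)
qed

lemma ratio_M:
  fixes \<sigma> :: real
  assumes "\<sigma> \<ge> 32" "real s = \<sigma>^2" "real k \<le> 5*\<sigma>" "p' + k \<le> s" "real (p'+k) \<ge> real s/2 - 3*\<sigma>"
  shows "real ((s - p') choose k) \<le> exp 320 * real ((p'+k) choose k)"
proof -
  define E where "E = 3*\<sigma> + real k"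
  define q where "q = real (s - p') / real (p' + 1)"
  have sp: "real (s - p') = real s - real p'" using assms(4) by (simp add: of_nat_diff)
  have E8: "E \<le> 8*\<sigma>" using assms(3) by (simp add: E_def)
  have Es: "E \<le> real s / 4"
  proof -
    have "32*\<sigma> \<le> \<sigma>*\<sigma>" using mult_right_mono[OF assms(1), of \<sigma>] assms(1) by simp
    then show ?thesis using E8 assms(2) by (simp add: power2_eq_square)
  qed
  have s0: "real s > 0" using assms(1,2) by (simp add: power2_eq_square)
  have E0: "E \<ge> 0" using assms(1) by (simp add: E_def)
  have lo: "real p' + 1 \<ge> real s/2 - E" using assms(5) by (simp add: E_def)
  have hi: "real s - real p' \<le> real s/2 + E" using assms(5) by (simp add: E_def)
  have den: "real s/2 - E \<ge> real s / 4" using Es by simp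
  have q0: "q \<ge> 0" by (simp add: q_def)
  have qb: "q \<le> 1 + 8*E/real s"
  proof -
    have "q \<le> (real s/2 + E) / (real s/2 - E)"
      unfolding q_def sp using lo hi den s0 E0
      by (intro frac_le) auto
    also have "\<dots> \<le> 1 + 8*E/real s"
    proof -
      have "real s/2 + E \<le> (real s/2 - E) * (1 + 8*E/real s)"
      proof -
        have "(real s/2 - E) * (1 + 8*E/real s) = real s/2 + 3*E - 8*E*E/real s"
          using s0 by (simp add: field_simps)
        moreover have "8*E*E/real s \<le> 2*E"
        proof -
          have "8*E*E \<le> 2*E*real s" using mult_left_mono[of "4*E" "real s" "2*E"] Es E0 by (simp add: algebra_simps)
          then show ?thesis using s0 by (simp add: field_simps)
        qed
        ultimately show ?thesis by linarith
      qed
      then show ?thesis using den s0 by (simp add: field_simps)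
    qed
    finally show ?thesis .
  qed
  have ratio: "real ((s - p') choose k) \<le> q^k * real ((p'+k) choose k)"
  proof (rule binom_ratio[OF _ q0])
    show "k \<le> p' + k" by simp
    fix j assume "j < k"
    have pos: "real (p'+1) > 0" by simp
    have "real (s - p') = q * real (p' + 1)" using pos by (simp add: q_def)
    also have "\<dots> \<le> q * (real (p'+k) - real j)" using \<open>j < k\<close> q0 by (intro mult_left_mono) auto
    finally show "real (s - p') - real j \<le> q * (real (p' + k) - real j)" by simp
  qed
  have "q^k \<le> (1 + 8*E/real s)^k" using qb q0 by (rule power_mono)
  also have "\<dots> \<le> exp (8*E/real s)^k"
    by (rule power_mono) (use E0 s0 in \<open>auto intro: exp_ge_add_one_self order.trans[OF _ exp_ge_add_one_self]\<close>)
  also have "\<dots> = exp (8*E*real k/real s)" by (simp add: exp_of_nat_mult[symmetric] algebra_simps)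
  also have "\<dots> \<le> exp 320"
  proof -
    have "E * real k \<le> 8*\<sigma> * (5*\<sigma>)" using E8 assms(3) E0 by (intro mult_mono) auto
    then have "8*E*real k \<le> 320 * real s" using assms(2) by (simp add: power2_eq_square)
    then show ?thesis using s0 by (simp add: field_simps)
  qed
  finally have "q^k \<le> exp 320" .
  then show ?thesis using ratio by (smt (verit) mult_right_mono of_nat_0_le_iff)
qed



lemma core:
  fixes A S :: "'a set" and c :: real and G :: "'a set \<Rightarrow> bool"
  assumes fin: "finite A" and SA: "S \<subseteq> A" and half: "card A \<le> 2 * card S" and big: "card A \<ge> 2048"
    and c0: "0 \<le> c" and c1: "c < 0.01"
    and anti: "\<And>Z U. Z \<subseteq> A \<Longrightarrow> U \<subseteq> Z \<inter> S \<Longrightarrow> G Z \<Longrightarrow> G (Z - U)"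
  shows "real (card {Z\<in>Pow A. G Z \<noteq> (real (card Z) > real (card A)/2 + c * sqrt (real (card A)))})
          \<ge> 2 ^ card A / (12 * (1 + exp 320))"
proof -
  define a where "a = real (card A)"
  define s where "s = real (card S)"
  define N where "N = (2::real) ^ card A"
  define \<alpha> where "\<alpha> = sqrt a"
  define \<sigma> where "\<sigma> = sqrt s"
  define M where "M = exp (320::real)"
  have finS: "finite S" using fin SA finite_subset by blast
  have a0: "a \<ge> 2048" using big by (simp add: a_def)
  have s2: "a \<le> 2 * s" using half by (simp add: a_def s_def)
  have s0: "s \<ge> 1024" using a0 s2 by simp
  have \<alpha>2: "\<alpha>^2 = a" using a0 by (simp add: \<alpha>_def)
  have \<sigma>2: "\<sigma>^2 = s" using s0 by (simp add: \<sigma>_def)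
  have \<alpha>0: "\<alpha> \<ge> 0" using a0 by (simp add: \<alpha>_def)
  have \<sigma>32: "\<sigma> \<ge> 32" unfolding \<sigma>_def by (rule real_le_rsqrt) (use s0 in simp)
  have \<alpha>\<sigma>: "\<alpha> \<le> 1.5 * \<sigma>"
  proof -
    have "a \<le> (1.5 * \<sigma>)^2" using s2 \<sigma>2 zero_le_square[of \<sigma>] by (simp add: power2_eq_square)
    then show ?thesis unfolding \<alpha>_def by (rule real_le_lsqrt[rotated]) (use \<sigma>32 in simp)
  qed
  define k where "k = nat \<lceil>3 * \<alpha>\<rceil>"
  have kc: "real k = real_of_int \<lceil>3 * \<alpha>\<rceil>" unfolding k_def using \<alpha>0 by simp
  have k_lo: "3 * \<alpha> \<le> real k" unfolding kc by (rule le_of_int_ceiling)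
  have k_hi: "real k \<le> 3 * \<alpha> + 1" unfolding kc by (rule of_int_ceiling_le_add_one)
  have k5: "real k \<le> 5 * \<sigma>" using k_hi \<alpha>\<sigma> \<sigma>32 by linarith
  define W :: "'a set \<Rightarrow> real" where "W = (\<lambda>Z. real (card Z) - a/2)"
  define X :: "'a set \<Rightarrow> real" where "X = (\<lambda>Z. real (card (Z \<inter> S)) - s/2)"
  define F :: "'a set \<Rightarrow> bool" where "F = (\<lambda>Z. real (card Z) > a/2 + c * \<alpha>)"
  define D where "D = {Z\<in>Pow A. G Z \<noteq> F Z}"
  define G0 where "G0 = {Z\<in>Pow A. W Z > c * \<alpha> \<and> W Z \<le> 3 * \<alpha> \<and> X Z \<ge> - 3 * \<sigma>}"
  have finD: "finite D" using fin by (simp add: D_def)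
  have finG0: "finite G0" using fin by (simp add: G0_def)
  have D_eq: "{Z\<in>Pow A. G Z \<noteq> (real (card Z) > real (card A)/2 + c * sqrt (real (card A)))} = D"
    by (simp add: D_def F_def a_def \<alpha>_def)
  have cA: "real (card {Z\<in>Pow A. W Z > c * \<alpha>}) \<ge> 0.15 * N"
    using upper_count[OF fin _ c0 c1] big by (simp add: W_def a_def \<alpha>_def N_def)
  have cB: "9 * a * real (card {Z\<in>Pow A. W Z > 3 * \<alpha>}) \<le> a * N / 4"
  proof -
    have "9 * a * real (card {Z\<in>Pow A. W Z > 3 * \<alpha>}) \<le> (\<Sum>Z\<in>Pow A. (W Z)^2)"
    proof (rule markov_count)
      fix Z assume "Z \<in> Pow A" "W Z > 3 * \<alpha>"
      then have "(3*\<alpha>)^2 \<le> (W Z)^2" using \<alpha>0 by (intro power_mono) auto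
      then show "9 * a \<le> (W Z)^2" using \<alpha>2 by (simp add: power_mult_distrib)
    qed (use fin a0 in auto)
    also have "\<dots> = a * N / 4" using moments_A(1)[OF fin] by (simp add: W_def a_def N_def)
    finally show ?thesis .
  qed
  have cC: "9 * s * real (card {Z\<in>Pow A. X Z < - 3 * \<sigma>}) \<le> s * N / 4"
  proof -
    have "9 * s * real (card {Z\<in>Pow A. X Z < - 3 * \<sigma>}) \<le> (\<Sum>Z\<in>Pow A. (X Z)^2)"
    proof (rule markov_count)
      fix Z assume "Z \<in> Pow A" "X Z < - 3 * \<sigma>"
      then have "(3*\<sigma>)^2 \<le> (- X Z)^2" using \<sigma>32 by (intro power_mono) auto
      then show "9 * s \<le> (X Z)^2" using \<sigma>2 by (simp add: power_mult_distrib)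
    qed (use fin s0 in auto)
    also have "\<dots> = s * N / 4"
    proof -
      have "A \<inter> S = S" using SA by auto
      then show ?thesis using conjunct1[OF moments[OF fin, of S]] by (simp add: X_def s_def N_def)
    qed
    finally show ?thesis .
  qed
  have cB': "real (card {Z\<in>Pow A. W Z > 3 * \<alpha>}) \<le> N / 36" using cB a0 by (simp add: field_simps)
  have cC': "real (card {Z\<in>Pow A. X Z < - 3 * \<sigma>}) \<le> N / 36" using cC s0 by (simp add: field_simps)
  have sub: "{Z\<in>Pow A. W Z > c * \<alpha>} \<subseteq> G0 \<union> ({Z\<in>Pow A. W Z > 3 * \<alpha>} \<union> {Z\<in>Pow A. X Z < - 3 * \<sigma>})"
    by (auto simp: G0_def)
  have "card {Z\<in>Pow A. W Z > c * \<alpha>} \<le> card (G0 \<union> ({Z\<in>Pow A. W Z > 3 * \<alpha>} \<union> {Z\<in>Pow A. X Z < - 3 * \<sigma>}))"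
    by (rule card_mono[OF _ sub]) (use fin in \<open>auto simp: G0_def\<close>)
  also have "\<dots> \<le> card G0 + (card {Z\<in>Pow A. W Z > 3 * \<alpha>} + card {Z\<in>Pow A. X Z < - 3 * \<sigma>})"
    using card_Un_le[of G0 "{Z\<in>Pow A. W Z > 3 * \<alpha>} \<union> {Z\<in>Pow A. X Z < - 3 * \<sigma>}"]
      card_Un_le[of "{Z\<in>Pow A. W Z > 3 * \<alpha>}" "{Z\<in>Pow A. X Z < - 3 * \<sigma>}"] by linarith
  finally have "real (card {Z\<in>Pow A. W Z > c * \<alpha>}) \<le> real (card G0) + (real (card {Z\<in>Pow A. W Z > 3 * \<alpha>}) + real (card {Z\<in>Pow A. X Z < - 3 * \<sigma>}))"
    by (simp only: of_nat_add[symmetric] of_nat_le_iff)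
  moreover have "N \<ge> 0" by (simp add: N_def)
  moreover have "0.15 * N = (15/100) * N" by simp
  ultimately have partA: "real (card G0) \<ge> N / 12" using cA cB' cC' by linarith
  have partB: "real (card G0) \<le> (1 + M) * real (card D)"
  proof -
    define Us where "Us = (\<lambda>Z. {U. U \<subseteq> Z \<inter> S \<and> card U = k})"
    define w where "w = (\<lambda>Z. 1 / real (card (Z \<inter> S) choose k))"
    have finUs: "\<And>Z. finite (Us Z)"
    proof -
      fix Z
      have "Us Z \<subseteq> Pow S" by (auto simp: Us_def)
      then show "finite (Us Z)" using finS finite_subset by blast
    qed
    have w0: "\<And>Z. w Z \<ge> 0" by (simp add: w_def)
    have G0A: "\<And>Z. Z \<in> G0 \<Longrightarrow> Z \<subseteq> A" by (auto simp: G0_def)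
    have kp: "\<And>Z. Z \<in> G0 \<Longrightarrow> k \<le> card (Z \<inter> S)"
    proof -
      fix Z assume "Z \<in> G0"
      then have "X Z \<ge> - 3 * \<sigma>" by (simp add: G0_def)
      then have "real (card (Z \<inter> S)) \<ge> s/2 - 3*\<sigma>" by (simp add: X_def)
      moreover have "s/2 - 3*\<sigma> \<ge> 5 * \<sigma>"
      proof -
        have "16*\<sigma> \<le> \<sigma>*\<sigma>" using mult_right_mono[OF \<sigma>32, of \<sigma>] \<sigma>32 by simp
        then show ?thesis using \<sigma>2 by (simp add: power2_eq_square)
      qed
      ultimately show "k \<le> card (Z \<inter> S)" using k5 by linarith
    qed
    have cardUs: "\<And>Z. Z \<in> G0 \<Longrightarrow> real (card (Us Z)) * w Z = 1"
    proof -
      fix Z assume Z: "Z \<in> G0"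
      have "finite (Z \<inter> S)" using finS by simp
      then have "card (Us Z) = card (Z \<inter> S) choose k" unfolding Us_def by (rule n_subsets)
      moreover have "(card (Z \<inter> S) choose k) > 0" using kp[OF Z] by simp
      ultimately show "real (card (Us Z)) * w Z = 1" by (simp add: w_def)
    qed
    have viol: "\<And>Z U. Z \<in> G0 \<Longrightarrow> U \<in> Us Z \<Longrightarrow> Z \<in> D \<or> Z - U \<in> D"
    proof -
      fix Z U assume Z: "Z \<in> G0" and U: "U \<in> Us Z"
      have ZA: "Z \<subseteq> A" using G0A[OF Z] .
      have UZ: "U \<subseteq> Z \<inter> S" and cU: "card U = k" using U by (auto simp: Us_def)
      have finZ: "finite Z" using ZA fin finite_subset by blast
      have cZU: "real (card (Z - U)) = real (card Z) - real k"
      proof -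
        have "finite U" using UZ finZ finite_subset by blast
        then have "card (Z - U) = card Z - card U" using UZ by (intro card_Diff_subset) auto
        moreover have "card U \<le> card Z" using UZ finZ by (intro card_mono) auto
        ultimately show ?thesis using cU by (simp add: of_nat_diff)
      qed
      have FZ: "F Z" using Z by (simp add: G0_def W_def F_def)
      have nF: "\<not> F (Z - U)"
      proof -
        have "W Z \<le> 3 * \<alpha>" using Z by (simp add: G0_def)
        then have "real (card (Z - U)) \<le> a/2" using cZU k_lo by (simp add: W_def)
        moreover have "c * \<alpha> \<ge> 0" using c0 \<alpha>0 by simp
        ultimately show ?thesis by (simp add: F_def)
      qed
      show "Z \<in> D \<or> Z - U \<in> D"
      proof (cases "Z \<in> D")
        case False
        then have "G Z" using FZ ZA by (auto simp: D_def)
        then have "G (Z - U)" using anti[OF ZA UZ] by simp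
        then show ?thesis using nF ZA by (auto simp: D_def)
      qed simp
    qed
    define ind where "ind = (\<lambda>P. if P then (1::real) else 0)"
    have "real (card G0) = (\<Sum>Z\<in>G0. \<Sum>U\<in>Us Z. w Z)"
      using cardUs by simp
    also have "\<dots> \<le> (\<Sum>Z\<in>G0. \<Sum>U\<in>Us Z. w Z * ind (Z \<in> D) + w Z * ind (Z - U \<in> D))"
    proof (intro sum_mono)
      fix Z U assume "Z \<in> G0" "U \<in> Us Z"
      then have "1 \<le> ind (Z \<in> D) + ind (Z - U \<in> D)" using viol by (auto simp: ind_def)
      then have "w Z * 1 \<le> w Z * (ind (Z \<in> D) + ind (Z - U \<in> D))" using w0 by (intro mult_left_mono) auto
      then show "w Z \<le> w Z * ind (Z \<in> D) + w Z * ind (Z - U \<in> D)" by (simp add: algebra_simps)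
    qed
    also have "\<dots> = (\<Sum>Z\<in>G0. \<Sum>U\<in>Us Z. w Z * ind (Z \<in> D)) + (\<Sum>Z\<in>G0. \<Sum>U\<in>Us Z. w Z * ind (Z - U \<in> D))"
      by (simp add: sum.distrib)
    also have "(\<Sum>Z\<in>G0. \<Sum>U\<in>Us Z. w Z * ind (Z \<in> D)) \<le> real (card D)"
    proof -
      have "(\<Sum>Z\<in>G0. \<Sum>U\<in>Us Z. w Z * ind (Z \<in> D)) = (\<Sum>Z\<in>G0. ind (Z \<in> D))"
        by (rule sum.cong) (auto simp: cardUs mult.commute[of "w _"] mult.assoc[symmetric] intro!: sym[OF trans[OF mult.commute]])
      also have "\<dots> = real (card (G0 \<inter> D))"
        by (simp add: ind_def sum.If_cases finG0 Int_def)
      also have "\<dots> \<le> real (card D)" using finD by (simp add: card_mono)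
      finally show ?thesis .
    qed
    also have "(\<Sum>Z\<in>G0. \<Sum>U\<in>Us Z. w Z * ind (Z - U \<in> D)) \<le> M * real (card D)"
    proof -
      define P' where "P' = {p\<in>Sigma G0 Us. fst p - snd p \<in> D}"
      define h :: "'a set \<times> 'a set \<Rightarrow> 'a set \<times> 'a set" where "h = (\<lambda>(Z,U). (Z - U, U))"
      define Qs where "Qs = (\<lambda>Z'. {U. U \<subseteq> S - Z' \<and> card U = k \<and> Z' \<union> U \<in> G0})"
      define Q where "Q = Sigma D Qs"
      have finSig: "finite (Sigma G0 Us)" using finG0 finUs by simp
      have finQs: "\<And>Z'. finite (Qs Z')"
      proof -
        fix Z'
        have "Qs Z' \<subseteq> Pow S" by (auto simp: Qs_def)
        then show "finite (Qs Z')" using finS finite_subset by blast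
      qed
      have finQ: "finite Q" using finD finQs by (simp add: Q_def)
      have "(\<Sum>Z\<in>G0. \<Sum>U\<in>Us Z. w Z * ind (Z - U \<in> D)) = (\<Sum>p\<in>Sigma G0 Us. w (fst p) * ind (fst p - snd p \<in> D))"
        using finG0 finUs by (simp add: sum.Sigma split_def)
      also have "\<dots> = (\<Sum>p\<in>Sigma G0 Us. if fst p - snd p \<in> D then w (fst p) else 0)"
        by (rule sum.cong) (auto simp: ind_def)
      also have "\<dots> = (\<Sum>p\<in>P'. w (fst p))"
        unfolding P'_def using finSig by (simp add: sum.inter_filter)
      also have "\<dots> = (\<Sum>q\<in>h ` P'. w (fst q \<union> snd q))"
      proof -
        have inj: "inj_on h P'"
        proof (rule inj_onI)
          fix p1 p2 assume p1: "p1 \<in> P'" and p2: "p2 \<in> P'" and e: "h p1 = h p2"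
          obtain Z1 U1 where pp1: "p1 = (Z1, U1)" by fastforce
          obtain Z2 U2 where pp2: "p2 = (Z2, U2)" by fastforce
          have "U1 \<subseteq> Z1" "U2 \<subseteq> Z2" using p1 p2 pp1 pp2 by (auto simp: P'_def Us_def)
          moreover have "Z1 - U1 = Z2 - U2" "U1 = U2" using e pp1 pp2 by (auto simp: h_def)
          ultimately have "Z1 = Z2" by blast
          then show "p1 = p2" using pp1 pp2 \<open>U1 = U2\<close> by simp
        qed
        have "(\<Sum>q\<in>h ` P'. w (fst q \<union> snd q)) = (\<Sum>p\<in>P'. w (fst (h p) \<union> snd (h p)))"
          using inj by (simp add: sum.reindex)
        also have "\<dots> = (\<Sum>p\<in>P'. w (fst p))"
        proof (rule sum.cong[OF refl])
          fix p assume "p \<in> P'"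
          then obtain Z U where pp: "p = (Z, U)" and "U \<subseteq> Z" by (auto simp: P'_def Us_def)
          then show "w (fst (h p) \<union> snd (h p)) = w (fst p)" by (auto simp: h_def Un_absorb2)
        qed
        finally show ?thesis by simp
      qed
      also have "\<dots> \<le> (\<Sum>q\<in>Q. w (fst q \<union> snd q))"
      proof (rule sum_mono2[OF finQ])
        show "h ` P' \<subseteq> Q"
        proof
          fix q assume "q \<in> h ` P'"
          then obtain Z U where Z: "Z \<in> G0" and U: "U \<in> Us Z" and ZD: "Z - U \<in> D" and q: "q = (Z - U, U)"
            by (auto simp: P'_def h_def)
          have UZ: "U \<subseteq> Z \<inter> S" and cU: "card U = k" using U by (auto simp: Us_def)
          have "(Z - U) \<union> U = Z" using UZ by auto
          then have "U \<in> Qs (Z - U)" using UZ cU Z by (auto simp: Qs_def)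
          then show "q \<in> Q" using ZD q by (simp add: Q_def)
        qed
      qed (use w0 in auto)
      also have "\<dots> = (\<Sum>Z'\<in>D. \<Sum>U\<in>Qs Z'. w (Z' \<union> U))"
        unfolding Q_def using finD finQs by (simp add: sum.Sigma split_def)
      also have "\<dots> \<le> (\<Sum>Z'\<in>D. M)"
      proof (rule sum_mono)
        fix Z' assume Z'D: "Z' \<in> D"
        show "(\<Sum>U\<in>Qs Z'. w (Z' \<union> U)) \<le> M"
        proof (cases "Qs Z' = {}")
          case True then show ?thesis by (simp add: M_def)
        next
          case False
          then obtain U0 where U0: "U0 \<in> Qs Z'" by blast
          define p' where "p' = card (Z' \<inter> S)"
          have cU: "\<And>U. U \<in> Qs Z' \<Longrightarrow> card ((Z' \<union> U) \<inter> S) = p' + k"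
          proof -
            fix U assume U: "U \<in> Qs Z'"
            then have US: "U \<subseteq> S - Z'" and cU: "card U = k" by (auto simp: Qs_def)
            have "(Z' \<union> U) \<inter> S = (Z' \<inter> S) \<union> U" using US by auto
            moreover have "(Z' \<inter> S) \<inter> U = {}" using US by auto
            moreover have "finite U" using US finS finite_subset by blast
            ultimately show "card ((Z' \<union> U) \<inter> S) = p' + k"
              using finS cU by (simp add: card_Un_disjoint p'_def)
          qed
          have "(\<Sum>U\<in>Qs Z'. w (Z' \<union> U)) = (\<Sum>U\<in>Qs Z'. 1 / real ((p' + k) choose k))"
            by (rule sum.cong) (auto simp: w_def cU)
          also have "\<dots> = real (card (Qs Z')) / real ((p' + k) choose k)" by simp
          also have "\<dots> \<le> real ((card S - p') choose k) / real ((p' + k) choose k)"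
          proof (rule divide_right_mono)
            have "Qs Z' \<subseteq> {U. U \<subseteq> S - Z' \<and> card U = k}" by (auto simp: Qs_def)
            then have "card (Qs Z') \<le> card {U. U \<subseteq> S - Z' \<and> card U = k}"
              by (rule card_mono[rotated]) (use finS in \<open>auto intro: finite_subset[of _ "Pow S"]\<close>)
            also have "\<dots> = card (S - Z') choose k" using finS by (intro n_subsets) simp
            also have "card (S - Z') = card S - p'"
              using finS by (simp add: card_Diff_subset_Int p'_def Int_commute)
            finally show "real (card (Qs Z')) \<le> real ((card S - p') choose k)" by simp
          qed simp
          also have "\<dots> \<le> M"
          proof -
            have U0S: "U0 \<subseteq> S - Z'" and cU0: "card U0 = k" and G0U: "Z' \<union> U0 \<in> G0"
              using U0 by (auto simp: Qs_def)
            have le: "p' + k \<le> card S"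
            proof -
              have "(Z' \<union> U0) \<inter> S \<subseteq> S" by auto
              then have "card ((Z' \<union> U0) \<inter> S) \<le> card S" using finS by (rule card_mono[rotated])
              then show ?thesis using cU[OF U0] by simp
            qed
            have ge: "real (p' + k) \<ge> real (card S)/2 - 3*\<sigma>"
              using G0U cU[OF U0] by (simp add: G0_def X_def s_def)
            have r: "real ((card S - p') choose k) \<le> exp 320 * real ((p'+k) choose k)"
              by (rule ratio_M[OF \<sigma>32 _ k5 le ge]) (simp add: \<sigma>2 s_def)
            have pos: "real ((p'+k) choose k) > 0" by simp
            show ?thesis using r pos by (simp add: M_def divide_le_eq)
          qed
          finally show ?thesis .
        qed
      qed
      also have "\<dots> = M * real (card D)" by simp
      finally show ?thesis .
    qed
    finally show ?thesis by (simp add: algebra_simps)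
  qed
  have "N / 12 \<le> (1 + M) * real (card D)" using partA partB by linarith
  then have "N / (12 * (1 + M)) \<le> real (card D)"
    by (simp add: field_simps M_def add_pos_pos)
  then show ?thesis unfolding D_eq by (simp add: N_def M_def)
qed



lemma far:
  fixes r :: "nat \<Rightarrow> bool" and c :: real
  assumes fin: "finite A" and big: "card A \<ge> 2048" and half: "card A \<le> 2 * card {i\<in>A. r i}"
    and c0: "0 \<le> c" and c1: "c < 0.01" and mono: "monotone_cube A g"
  shows "fdist A (\<lambda>x. real (card {i\<in>A. x i \<noteq> r i}) > real (card A)/2 + c * sqrt (real (card A))) g
           \<ge> 1 / (12 * (1 + exp 320))"
proof -
  define S where "S = {i\<in>A. r i}"
  define \<phi> :: "(nat \<Rightarrow> bool) \<Rightarrow> nat set" where "\<phi> = (\<lambda>x. {i\<in>A. x i \<noteq> r i})"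
  define \<psi> :: "nat set \<Rightarrow> (nat \<Rightarrow> bool)" where "\<psi> = (\<lambda>Z i. i \<in> A \<and> ((i \<in> Z) \<noteq> r i))"
  define G where "G = (\<lambda>Z. g (\<psi> Z))"
  define F :: "nat set \<Rightarrow> bool" where "F = (\<lambda>Z. real (card Z) > real (card A)/2 + c * sqrt (real (card A)))"
  have \<psi>\<phi>: "\<And>x. x \<in> cube A \<Longrightarrow> \<psi> (\<phi> x) = x"
    by (auto simp: \<psi>_def \<phi>_def cube_def fun_eq_iff)
  have \<phi>\<psi>: "\<And>Z. Z \<subseteq> A \<Longrightarrow> \<phi> (\<psi> Z) = Z"
    by (auto simp: \<psi>_def \<phi>_def)
  have \<psi>cube: "\<And>Z. \<psi> Z \<in> cube A" by (auto simp: \<psi>_def cube_def)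
  have anti: "\<And>Z U. Z \<subseteq> A \<Longrightarrow> U \<subseteq> Z \<inter> S \<Longrightarrow> G Z \<Longrightarrow> G (Z - U)"
  proof -
    fix Z U assume ZA: "Z \<subseteq> A" and U: "U \<subseteq> Z \<inter> S" and GZ: "G Z"
    have "\<forall>i\<in>A. \<psi> Z i \<longrightarrow> \<psi> (Z - U) i" using U by (auto simp: \<psi>_def S_def)
    then show "G (Z - U)" using mono GZ \<psi>cube unfolding monotone_cube_def G_def by blast
  qed
  have SA: "S \<subseteq> A" by (auto simp: S_def)
  have core': "real (card {Z\<in>Pow A. G Z \<noteq> F Z}) \<ge> 2 ^ card A / (12 * (1 + exp 320))"
  proof -
    have h2: "card A \<le> 2 * card S" using half by (simp add: S_def)
    show ?thesis using core[where G=G, OF fin SA h2 big c0 c1 anti] by (simp add: F_def)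
  qed
  have bij: "bij_betw \<phi> {x\<in>cube A. F (\<phi> x) \<noteq> g x} {Z\<in>Pow A. G Z \<noteq> F Z}"
  proof (rule bij_betw_byWitness[where f'=\<psi>])
    show "\<forall>x\<in>{x\<in>cube A. F (\<phi> x) \<noteq> g x}. \<psi> (\<phi> x) = x" using \<psi>\<phi> by auto
    show "\<forall>Z\<in>{Z\<in>Pow A. G Z \<noteq> F Z}. \<phi> (\<psi> Z) = Z" using \<phi>\<psi> by auto
    show "\<phi> ` {x\<in>cube A. F (\<phi> x) \<noteq> g x} \<subseteq> {Z\<in>Pow A. G Z \<noteq> F Z}"
      using \<psi>\<phi> by (auto simp: G_def \<phi>_def)
    show "\<psi> ` {Z\<in>Pow A. G Z \<noteq> F Z} \<subseteq> {x\<in>cube A. F (\<phi> x) \<noteq> g x}"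
      using \<phi>\<psi> \<psi>cube by (auto simp: G_def)
  qed
  have "card {x\<in>cube A. F (\<phi> x) \<noteq> g x} = card {Z\<in>Pow A. G Z \<noteq> F Z}"
    using bij by (rule bij_betw_same_card)
  then have "real (card {x\<in>cube A. F (\<phi> x) \<noteq> g x}) / 2 ^ card A \<ge> 1 / (12 * (1 + exp 320))"
    using core' by (simp add: field_simps)
  then show ?thesis by (simp add: fdist_def F_def \<phi>_def)
qed

theorem mainTheorem7:
  shows "\<exists>\<delta>>0. \<forall>c1::real. 0 < c1 \<and> c1 < 0.01 \<longrightarrow>
           (\<exists>a0::nat. \<forall>a\<ge>a0. \<forall>A::nat set. finite A \<and> card A = a \<longrightarrow>
              (\<forall>r\<in>cube A.
                 (\<forall>g. monotone_cube A g \<longrightarrow> fdist A (\<lambda>x. h_minus_0 c1 A (xorv x r)) g \<ge> \<delta>) \<or>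
                 (\<forall>g. monotone_cube A g \<longrightarrow> fdist A (\<lambda>x. h_minus_1 c1 A (xorv x r)) g \<ge> \<delta>)))"
proof (intro exI[of _ "1 / (12 * (1 + exp 320))"] conjI allI impI)
  show "(0::real) < 1 / (12 * (1 + exp 320))" by (simp add: add_pos_pos)
  fix c1 :: real assume c: "0 < c1 \<and> c1 < 0.01"
  show "\<exists>a0::nat. \<forall>a\<ge>a0. \<forall>A::nat set. finite A \<and> card A = a \<longrightarrow>
              (\<forall>r\<in>cube A.
                 (\<forall>g. monotone_cube A g \<longrightarrow> fdist A (\<lambda>x. h_minus_0 c1 A (xorv x r)) g \<ge> 1 / (12 * (1 + exp 320))) \<or>
                 (\<forall>g. monotone_cube A g \<longrightarrow> fdist A (\<lambda>x. h_minus_1 c1 A (xorv x r)) g \<ge> 1 / (12 * (1 + exp 320))))"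
  proof (intro exI[of _ 2048] allI impI ballI)
    fix a :: nat and A :: "nat set" and r
    assume "2048 \<le> a" and A: "finite A \<and> card A = a" and "r \<in> cube A"
    then have fin: "finite A" and big: "card A \<ge> 2048" by auto
    have c0: "0 \<le> c1" and c1: "c1 < 0.01" using c by auto
    show "(\<forall>g. monotone_cube A g \<longrightarrow> fdist A (\<lambda>x. h_minus_0 c1 A (xorv x r)) g \<ge> 1 / (12 * (1 + exp 320))) \<or>
          (\<forall>g. monotone_cube A g \<longrightarrow> fdist A (\<lambda>x. h_minus_1 c1 A (xorv x r)) g \<ge> 1 / (12 * (1 + exp 320)))"
    proof (cases "card A \<le> 2 * card {i\<in>A. r i}")
      case True
      have "\<And>x. h_minus_0 c1 A (xorv x r) \<longleftrightarrow> real (card {i\<in>A. x i \<noteq> r i}) > real (card A)/2 + c1 * sqrt (real (card A))"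
        by (simp add: h_minus_0_def hweight_def xorv_def)
      then show ?thesis using far[OF fin big True c0 c1] by simp
    next
      case False
      define r' where "r' = (\<lambda>i. \<not> r i)"
      have e: "{i\<in>A. r' i} = A - {i\<in>A. r i}" by (auto simp: r'_def)
      have "card {i\<in>A. r' i} = card A - card {i\<in>A. r i}"
        unfolding e using fin by (intro card_Diff_subset) auto
      then have half: "card A \<le> 2 * card {i\<in>A. r' i}" using False by simp
      have "\<And>x. h_minus_1 c1 A (xorv x r) \<longleftrightarrow> real (card {i\<in>A. x i \<noteq> r' i}) > real (card A)/2 + c1 * sqrt (real (card A))"
      proof -
        fix x :: "nat \<Rightarrow> bool"
        have e2: "{i\<in>A. x i \<noteq> r' i} = A - {i\<in>A. x i \<noteq> r i}" by (auto simp: r'_def)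
        have "card {i\<in>A. x i \<noteq> r' i} = card A - card {i\<in>A. x i \<noteq> r i}"
          unfolding e2 using fin by (intro card_Diff_subset) auto
        moreover have "card {i\<in>A. x i \<noteq> r i} \<le> card A" using fin by (intro card_mono) auto
        ultimately have "real (card {i\<in>A. x i \<noteq> r' i}) = real (card A) - real (card {i\<in>A. x i \<noteq> r i})"
          by (simp add: of_nat_diff)
        then show "h_minus_1 c1 A (xorv x r) \<longleftrightarrow> real (card {i\<in>A. x i \<noteq> r' i}) > real (card A)/2 + c1 * sqrt (real (card A))"
          by (auto simp: h_minus_1_def hweight_def xorv_def)
      qed
      then show ?thesis using far[OF fin big half c0 c1] by simp
    qed
  qed
qed


end
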